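(* Suppose there exist $\bar\beta_1,\dots,\bar\beta_{m^*}\in\mathcal B^*$ and nonnegative constants $\mu_1,\dots,\mu_{m^*}$ with $\Pi^*\preceq\sum_{k=1}^{m^*}\mu_k\bar\beta_k\bar\beta_k^\top$, and set $\mu^*=\sum_k\mu_k$. If $\max_\ell|\hat\beta_\ell-\beta_\ell|\le\varepsilon$, then $$\operatorname{tr}\big((I-\widehat\Pi)\Pi^*\big)\le4\varepsilon^2\mu^*\quad\text{and}\quad\operatorname{tr}\big((\widehat\Pi-\Pi^* )^2\big)\le8\varepsilon^2\mu^*.$$
   Context: Let $\mathcal S$ be an $m^*$-dimensional linear subspace of $\mathbb R^d$ with orthogonal projector $\Pi^*$, let $\beta_1,\dots,\beta_L\in\mathcal S$, and let $\hat\beta_1,\dots,\hat\beta_L\in\mathbb R^d$ be arbitrary. $|\cdot|$ is the Euclidean norm, $I$ the $d\times d$ identity, $A\preceq B$ means $B-A$ is positive semidefinite. $\mathcal B^*=\{\sum_{\ell=1}^Lc_\ell\beta_\ell:\sum_\ell|c_\ell|\le1\}$. Let $\mathcal A_{m^*}=\{\Pi\in\mathbb R^{d\times d}:\Pi=\Pi^\top,\ 0\preceq\Pi\preceq I,\ \operatorname{tr}\Pi\le m^*\}$ and let $\widehat\Pi$ be a minimizer over $\Pi\in\mathcal A_{m^*}$ of $\max_\ell\hat\beta_\ell^\top(I-\Pi)\hat\beta_\ell$. *)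

theory Defs
  imports "HOL-Analysis.Analysis"
begin

definition loewner_le :: "real^'n^'n \<Rightarrow> real^'n^'n \<Rightarrow> bool" where
  "loewner_le A B \<longleftrightarrow> (\<forall>x::real^'n. 0 \<le> x \<bullet> ((B - A) *v x))"

definition outer :: "real^'n \<Rightarrow> real^'n \<Rightarrow> real^'n^'n" where
  "outer u v = (\<chi> i j. u $ i * v $ j)"

definition orth_projector :: "real^'n^'n \<Rightarrow> (real^'n) set \<Rightarrow> bool" where
  "orth_projector P S \<longleftrightarrow> transpose P = P \<and> P ** P = P \<and> range (\<lambda>x. P *v x) = S"

definition Bstar :: "(nat \<Rightarrow> real^'n) \<Rightarrow> nat \<Rightarrow> (real^'n) set" where
  "Bstar \<beta> L = {(\<Sum>l\<in>{1..L}. c l *\<^sub>R \<beta> l) | c. (\<Sum>l\<in>{1..L}. \<bar>c l\<bar>) \<le> 1}"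

definition Aset :: "nat \<Rightarrow> (real^'n^'n) set" where
  "Aset m = {P. transpose P = P \<and> loewner_le 0 P \<and> loewner_le P (mat 1) \<and> trace P \<le> real m}"

definition obj :: "(nat \<Rightarrow> real^'n) \<Rightarrow> nat \<Rightarrow> real^'n^'n \<Rightarrow> real" where
  "obj bh L P = Max ((\<lambda>l. bh l \<bullet> ((mat 1 - P) *v bh l)) ` {1..L})"

end

theory Submission
  imports Defs
begin


lemma outer_mv: "outer u v *v x = (v \<bullet> x) *\<^sub>R u"
  by (simp add: vec_eq_iff outer_def matrix_vector_mult_def inner_vec_def sum_distrib_left mult_ac)

lemma outer_transpose: "transpose (outer u v) = outer v u"
  by (simp add: vec_eq_iff outer_def transpose_def mult_ac)

lemma trace_outer: "trace (A ** outer u v) = v \<bullet> (A *v u)"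
  by (simp add: trace_def matrix_matrix_mult_def outer_def matrix_vector_mult_def inner_vec_def sum_distrib_left mult_ac)

lemma trace_scaleR: "trace (c *\<^sub>R A) = c * trace (A::real^'n^'n)"
  by (simp add: trace_def sum_distrib_left)

lemma mm_scaleR_right: "(A::real^'n^'n) ** (c *\<^sub>R B) = c *\<^sub>R (A ** B)"
  by (simp add: vec_eq_iff matrix_matrix_mult_def sum_distrib_left mult_ac)

lemma mm_sum_right: "(A::real^'n^'n) ** sum f S = (\<Sum>k\<in>S. A ** f k)"
  by (induction S rule: infinite_finite_induct) (auto simp: matrix_add_ldistrib)

lemma trace_sum: "trace (sum f S) = (\<Sum>k\<in>S. trace (f k :: real^'n^'n))"
  by (induction S rule: infinite_finite_induct) (auto simp: trace_add trace_0[unfolded mat_0])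

lemma diag_qf: "(D::real^'n^'n) $ i $ i = axis i 1 \<bullet> (D *v axis i 1)"
  by (simp add: inner_axis' matrix_vector_mul_component inner_axis)

lemma sym_inner: "transpose (D::real^'n^'n) = D \<Longrightarrow> x \<bullet> (D *v y) = y \<bullet> (D *v x)"
  by (metis dot_lmul_matrix inner_commute vector_transpose_matrix)

lemma quad_disc:
  fixes a b c :: real
  assumes h: "\<And>t. 0 \<le> a + 2*t*b + t^2*c"
  shows "b^2 \<le> a*c"
proof (cases "c = 0")
  case True
  have "b = 0"
  proof (rule ccontr)
    assume "b \<noteq> 0"
    have "0 \<le> a + 2*(-(a+1)/(2*b))*b + (-(a+1)/(2*b))^2*c" by (rule h)
    also have "\<dots> = -1" using True \<open>b \<noteq> 0\<close> by (simp add: field_simps)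
    finally show False by simp
  qed
  then show ?thesis using True h[of 0] by simp
next
  case False
  have c0: "c \<ge> 0"
  proof (rule ccontr)
    assume "\<not> c \<ge> 0"
    hence cn: "c < 0" by simp
    define t where "t = (\<bar>a\<bar> + 2*\<bar>b\<bar> + 1) / (-c) + 1"
    have t1: "t \<ge> 1" using cn by (simp add: t_def field_simps)
    have "t * (-c) \<ge> \<bar>a\<bar> + 2*\<bar>b\<bar> + 1" using cn by (simp add: t_def field_simps)
    hence "t * (t * (-c)) \<ge> t * (\<bar>a\<bar> + 2*\<bar>b\<bar> + 1)" using t1 by (intro mult_left_mono) auto
    moreover have "t * (\<bar>a\<bar> + 2*\<bar>b\<bar> + 1) \<ge> \<bar>a\<bar> + 2*\<bar>b\<bar>*t + 1"
    proof -
      have "t * \<bar>a\<bar> \<ge> \<bar>a\<bar>" using t1 by (simp add: mult_le_cancel_right1)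
      thus ?thesis using t1 by (simp add: algebra_simps)
    qed
    ultimately have "t^2 * (-c) \<ge> \<bar>a\<bar> + 2*\<bar>b\<bar>*t + 1" by (simp add: power2_eq_square mult_ac)
    moreover have "b*t \<le> \<bar>b\<bar>*t" using t1 by (intro mult_right_mono) auto
    moreover have "a \<le> \<bar>a\<bar>" by simp
    ultimately have "a + 2*t*b + t^2*c < 0" by (simp add: algebra_simps)
    with h[of t] show False by simp
  qed
  hence cp: "c > 0" using False by simp
  have "0 \<le> a + 2*(-b/c)*b + (-b/c)^2*c" by (rule h)
  also have "\<dots> = a - b^2/c" using cp by (simp add: field_simps power2_eq_square)
  finally show ?thesis using cp by (simp add: field_simps)
qed

lemma psd_cs:
  fixes D :: "real^'n^'n"
  assumes sym: "transpose D = D" and psd: "\<And>z. 0 \<le> z \<bullet> (D *v z)"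
  shows "(x \<bullet> (D *v y))^2 \<le> (x \<bullet> (D *v x)) * (y \<bullet> (D *v y))"
proof (rule quad_disc)
  fix t :: real
  have "0 \<le> (x + t *\<^sub>R y) \<bullet> (D *v (x + t *\<^sub>R y))" by (rule psd)
  also have "\<dots> = x \<bullet> (D *v x) + 2*t*(x \<bullet> (D *v y)) + t^2 * (y \<bullet> (D *v y))"
    using sym_inner[OF sym, of y x]
    by (simp add: matrix_vector_right_distrib matrix_vector_mult_scaleR inner_add_left inner_add_right power2_eq_square distrib_left)
  finally show "0 \<le> x \<bullet> (D *v x) + 2*t*(x \<bullet> (D *v y)) + t^2 * (y \<bullet> (D *v y))" .
qed

lemma sym_entry: "transpose (D::real^'n^'n) = D \<Longrightarrow> D $ j $ i = D $ i $ j"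
  by (metis transpose_def vec_lambda_beta)

lemma trace_psd:
  fixes A D :: "real^'n^'n"
  assumes psdA: "\<And>x. 0 \<le> x \<bullet> (A *v x)" and sym: "transpose D = D" and psd: "\<And>x. 0 \<le> x \<bullet> (D *v x)"
  shows "0 \<le> trace (A ** D)"
  using sym psd
proof (induction "card {i. D$i$i \<noteq> 0}" arbitrary: D rule: less_induct)
  case less
  note sym = less.prems(1) and psd = less.prems(2)
  have ent: "D $ j $ i = axis j 1 \<bullet> (D *v axis i 1)" for i j
    by (simp add: inner_axis' matrix_vector_mul_component inner_axis)
  have dge: "D $ i $ i \<ge> 0" for i using psd[of "axis i 1"] ent[of i i] by simp
  show ?case
  proof (cases "\<exists>i. D$i$i \<noteq> 0")
    case False
    have "D $ j $ i = 0" for i j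
    proof -
      have "(D $ j $ i)^2 \<le> D$j$j * D$i$i" using psd_cs[OF sym psd, of "axis j 1" "axis i 1"] ent by simp
      thus ?thesis using False by simp
    qed
    hence "D = 0" by (simp add: vec_eq_iff)
    thus ?thesis by (simp add: trace_def matrix_matrix_mult_def)
  next
    case True
    then obtain i where di: "D$i$i \<noteq> 0" by blast
    define d where "d = D$i$i"
    have dpos: "d > 0" using dge[of i] di d_def by simp
    define w where "w = D *v axis i 1"
    have wj: "w $ j = D $ j $ i" for j using ent w_def by (simp add: inner_axis' matrix_vector_mul_component)
    define D' where "D' = D - (1/d) *\<^sub>R outer w w"
    have mv: "D' *v x = D *v x - ((1/d) * (w \<bullet> x)) *\<^sub>R w" for x
      by (simp add: D'_def matrix_vector_mult_diff_rdistrib outer_mv scaleR_matrix_vector_assoc[symmetric])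
    have sym': "transpose D' = D'"
      using sym_entry[OF sym] by (simp add: D'_def vec_eq_iff transpose_def outer_def mult_ac)
    have psd': "0 \<le> x \<bullet> (D' *v x)" for x
    proof -
      have cs: "(x \<bullet> w)^2 \<le> (x \<bullet> (D *v x)) * d"
        using psd_cs[OF sym psd, of x "axis i 1"] ent[of i i] by (simp add: w_def d_def)
      have "x \<bullet> (D' *v x) = x \<bullet> (D *v x) - (x \<bullet> w)^2 / d"
        by (simp add: mv inner_diff_right power2_eq_square inner_commute)
      also have "\<dots> \<ge> 0" using cs dpos by (simp add: field_simps)
      finally show ?thesis by simp
    qed
    have dj: "D' $ j $ j = D $ j $ j - (D $ j $ i)^2 / d" for j
      by (simp add: D'_def outer_def wj power2_eq_square)
    have sub: "{j. D'$j$j \<noteq> 0} \<subset> {j. D$j$j \<noteq> 0}"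
    proof -
      have "D' $ j $ j \<ge> 0" for j using psd'[of "axis j 1"] 
        by (simp add: inner_axis' matrix_vector_mul_component inner_axis)
      moreover have "D' $ j $ j \<le> D $ j $ j" for j using dj[of j] dpos by simp
      ultimately have "{j. D'$j$j \<noteq> 0} \<subseteq> {j. D$j$j \<noteq> 0}"
        by (metis (mono_tags, lifting) Collect_mono order_antisym)
      moreover have "D' $ i $ i = 0" using dj[of i] dpos by (simp add: d_def power2_eq_square)
      ultimately show ?thesis using di by auto
    qed
    have "card {j. D'$j$j \<noteq> 0} < card {j. D$j$j \<noteq> 0}"
      by (rule psubset_card_mono[OF _ sub]) simp
    from less.hyps[OF this sym' psd'] have IH: "0 \<le> trace (A ** D')" .
    have "D = D' + (1/d) *\<^sub>R outer w w" by (simp add: D'_def)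
    hence "trace (A ** D) = trace (A ** D') + (1/d) * (w \<bullet> (A *v w))"
      by (simp add: matrix_add_ldistrib trace_add mm_scaleR_right trace_scaleR trace_outer)
    also have "\<dots> \<ge> 0" using IH psdA[of w] dpos by simp
    finally show ?thesis .
  qed
qed

lemma qf_add:
  fixes A :: "real^'n^'n"
  assumes sym: "transpose A = A"
  shows "(x + y) \<bullet> (A *v (x + y)) = x \<bullet> (A *v x) + 2 * (x \<bullet> (A *v y)) + y \<bullet> (A *v y)"
  using sym_inner[OF sym, of y x]
  by (simp add: matrix_vector_right_distrib inner_add_left inner_add_right)

lemma qf_scale:
  fixes A :: "real^'n^'n"
  shows "(c *\<^sub>R x) \<bullet> (A *v (c *\<^sub>R x)) = c^2 * (x \<bullet> (A *v x))"
  by (simp add: matrix_vector_mult_scaleR power2_eq_square)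

lemma sqrt_qf_triangle:
  fixes A :: "real^'n^'n"
  assumes sym: "transpose A = A" and psd: "\<And>z. 0 \<le> z \<bullet> (A *v z)"
  shows "sqrt ((x + y) \<bullet> (A *v (x + y))) \<le> sqrt (x \<bullet> (A *v x)) + sqrt (y \<bullet> (A *v y))"
proof -
  define a where "a = x \<bullet> (A *v x)"
  define b where "b = x \<bullet> (A *v y)"
  define c where "c = y \<bullet> (A *v y)"
  have a0: "a \<ge> 0" and c0: "c \<ge> 0" using psd a_def c_def by auto
  have "b^2 \<le> a * c" using psd_cs[OF sym psd, of x y] by (simp add: a_def b_def c_def)
  hence "sqrt (b^2) \<le> sqrt (a*c)" by (rule real_sqrt_le_mono)
  hence "b \<le> sqrt a * sqrt c" by (simp add: real_sqrt_mult)
  hence "a + 2*b + c \<le> (sqrt a + sqrt c)^2" using a0 c0 by (simp add: power2_eq_square algebra_simps)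
  hence "sqrt (a + 2*b + c) \<le> sqrt ((sqrt a + sqrt c)^2)" by (rule real_sqrt_le_mono)
  also have "\<dots> = sqrt a + sqrt c" using a0 c0 by simp
  finally show ?thesis using qf_add[OF sym, of x y] by (simp add: a_def b_def c_def)
qed

lemma sqrt_qf_sum:
  fixes A :: "real^'n^'n"
  assumes sym: "transpose A = A" and psd: "\<And>z. 0 \<le> z \<bullet> (A *v z)"
  shows "sqrt ((\<Sum>l\<in>F. c l *\<^sub>R v l) \<bullet> (A *v (\<Sum>l\<in>F. c l *\<^sub>R v l))) \<le> (\<Sum>l\<in>F. \<bar>c l\<bar> * sqrt (v l \<bullet> (A *v v l)))"
proof (induction F rule: infinite_finite_induct)
  case (insert l F)
  have "sqrt ((c l *\<^sub>R v l + (\<Sum>l\<in>F. c l *\<^sub>R v l)) \<bullet> (A *v (c l *\<^sub>R v l + (\<Sum>l\<in>F. c l *\<^sub>R v l))))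
     \<le> sqrt ((c l *\<^sub>R v l) \<bullet> (A *v (c l *\<^sub>R v l))) + sqrt ((\<Sum>l\<in>F. c l *\<^sub>R v l) \<bullet> (A *v (\<Sum>l\<in>F. c l *\<^sub>R v l)))"
    by (rule sqrt_qf_triangle[OF sym psd])
  also have "sqrt ((c l *\<^sub>R v l) \<bullet> (A *v (c l *\<^sub>R v l))) = \<bar>c l\<bar> * sqrt (v l \<bullet> (A *v v l))"
    by (simp only: qf_scale real_sqrt_mult real_sqrt_abs)
  finally show ?case using insert by simp
qed auto

lemma qf_Bstar:
  fixes A :: "real^'n^'n"
  assumes sym: "transpose A = A" and psd: "\<And>z. 0 \<le> z \<bullet> (A *v z)"
    and r0: "r \<ge> 0" and hv: "\<And>l. l \<in> F \<Longrightarrow> v l \<bullet> (A *v v l) \<le> r^2"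
    and hc: "(\<Sum>l\<in>F. \<bar>c l\<bar>) \<le> 1"
  shows "(\<Sum>l\<in>F. c l *\<^sub>R v l) \<bullet> (A *v (\<Sum>l\<in>F. c l *\<^sub>R v l)) \<le> r^2"
proof -
  let ?u = "\<Sum>l\<in>F. c l *\<^sub>R v l"
  have "sqrt (?u \<bullet> (A *v ?u)) \<le> (\<Sum>l\<in>F. \<bar>c l\<bar> * sqrt (v l \<bullet> (A *v v l)))"
    by (rule sqrt_qf_sum[OF sym psd])
  also have "\<dots> \<le> (\<Sum>l\<in>F. \<bar>c l\<bar> * r)"
  proof (rule sum_mono)
    fix l assume "l \<in> F"
    hence "sqrt (v l \<bullet> (A *v v l)) \<le> sqrt (r^2)" using hv by (intro real_sqrt_le_mono) auto
    thus "\<bar>c l\<bar> * sqrt (v l \<bullet> (A *v v l)) \<le> \<bar>c l\<bar> * r" using r0 by (intro mult_left_mono) auto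
  qed
  also have "\<dots> = (\<Sum>l\<in>F. \<bar>c l\<bar>) * r" by (simp add: sum_distrib_right)
  also have "\<dots> \<le> r" using hc r0 by (simp add: mult_left_le_one_le)
  finally have "sqrt (?u \<bullet> (A *v ?u)) \<le> r" .
  hence "(sqrt (?u \<bullet> (A *v ?u)))^2 \<le> r^2" using psd[of ?u] by (intro power_mono) auto
  thus ?thesis using psd[of ?u] by simp
qed



lemma mm_diff_left: "(A::real^'n^'n) ** (B - C) = A ** B - A ** C"
  by (simp add: vec_eq_iff matrix_matrix_mult_def sum_subtractf algebra_simps)

lemma mm_diff_right: "((A::real^'n^'n) - B) ** C = A ** C - B ** C"
  by (simp add: vec_eq_iff matrix_matrix_mult_def sum_subtractf algebra_simps)

lemma transpose_diff': "transpose ((A::real^'n^'n) - B) = transpose A - transpose B"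
  by (simp add: vec_eq_iff transpose_def)

lemma transpose_sum_outer: "transpose (\<Sum>k\<in>F. (c k) *\<^sub>R outer (v k) (v k)) = (\<Sum>k\<in>F. (c k) *\<^sub>R outer (v k) (v k) :: real^'n^'n)"
  by (simp add: vec_eq_iff transpose_def outer_def sum_component mult_ac)

lemma qf_proj:
  fixes P :: "real^'n^'n"
  assumes "transpose P = P" "P ** P = P"
  shows "x \<bullet> (P *v x) = (P *v x) \<bullet> (P *v x)"
proof -
  have "x \<bullet> (P *v x) = x \<bullet> (P *v (P *v x))" using assms by (simp add: matrix_vector_mul_assoc)
  also have "\<dots> = (x v* transpose P) \<bullet> (P *v x)" by (simp only: dot_lmul_matrix assms(1))
  also have "\<dots> = (P *v x) \<bullet> (P *v x)" by simp
  finally show ?thesis .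
qed

lemma proj_trace:
  fixes P :: "real^'n^'n"
  assumes "subspace S" "orth_projector P S"
  shows "trace P = real (dim S)"
proof -
  have symP: "transpose P = P" and idem: "P ** P = P" and rng: "range (\<lambda>x. P *v x) = S"
    using assms(2) unfolding orth_projector_def by blast+
  obtain B where BS: "B \<subseteq> S" and orth: "pairwise orthogonal B" and nB: "\<And>x. x \<in> B \<Longrightarrow> norm x = 1"
    and ind: "independent B" and cB: "card B = dim S" and spB: "span B = S"
    using orthonormal_basis_subspace[OF assms(1)] by blast
  have finB: "finite B" using ind by (rule independent_imp_finite)
  have fixS: "P *v x = x" if "x \<in> S" for x
  proof -
    obtain y where "x = P *v y" using rng \<open>x \<in> S\<close> by auto
    thus ?thesis using idem by (simp add: matrix_vector_mul_assoc)
  qed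
  have Px: "P *v x = (\<Sum>b\<in>B. (b \<bullet> x) *\<^sub>R b)" for x
  proof -
    define p where "p = (\<Sum>b\<in>B. (b \<bullet> x) *\<^sub>R b)"
    define y where "y = x - p"
    have "p \<in> span B" unfolding p_def by (intro span_sum span_scale span_base)
    hence pS: "p \<in> S" using spB by simp
    have oy: "orthogonal y b'" if "b' \<in> B" for b'
    proof -
      have "b' \<bullet> p = (\<Sum>b\<in>B. (b \<bullet> x) * (b' \<bullet> b))" by (simp add: p_def inner_sum_right)
      also have "\<dots> = (\<Sum>b\<in>B. if b = b' then b' \<bullet> x else 0)"
      proof (rule sum.cong)
        fix b assume "b \<in> B"
        show "(b \<bullet> x) * (b' \<bullet> b) = (if b = b' then b' \<bullet> x else 0)"
        proof (cases "b = b'")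
          case True
          have "b' \<bullet> b' = 1" using nB[OF that] by (simp add: norm_eq_1)
          thus ?thesis using True by simp
        next
          case False
          hence "b' \<bullet> b = 0" using orth \<open>b \<in> B\<close> that by (auto simp: pairwise_def orthogonal_def)
          thus ?thesis using False by simp
        qed
      qed simp
      also have "\<dots> = b' \<bullet> x" using that finB by simp
      finally show ?thesis by (simp add: y_def orthogonal_def inner_diff_right inner_commute)
    qed
    have "orthogonal y (P *v y)"
      by (rule orthogonal_to_span[OF _ oy]) (use rng spB in auto)
    hence "(P *v y) \<bullet> (P *v y) = 0" using qf_proj[OF symP idem, of y] by (simp add: orthogonal_def)
    hence Py: "P *v y = 0" by simp
    have "P *v x = P *v p + P *v y" by (simp add: y_def matrix_vector_right_distrib[symmetric])
    also have "\<dots> = p" using fixS[OF pS] Py by simp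
    finally show ?thesis by (simp add: p_def)
  qed
  have "trace P = (\<Sum>i\<in>UNIV. axis i 1 \<bullet> (P *v axis i 1))"
    by (simp add: trace_def inner_axis' matrix_vector_mul_component inner_axis)
  also have "\<dots> = (\<Sum>i\<in>UNIV. \<Sum>b\<in>B. (b $ i) * (b $ i))"
    by (simp add: Px inner_sum_right inner_axis inner_axis')
  also have "\<dots> = (\<Sum>b\<in>B. b \<bullet> b)"
    by (subst sum.swap) (simp add: inner_vec_def)
  also have "\<dots> = (\<Sum>b\<in>B. 1)" using nB by (intro sum.cong) (auto simp: norm_eq_1)
  also have "\<dots> = real (dim S)" using cB by simp
  finally show ?thesis .
qed

theorem proposition5:
  fixes S :: "(real^'n) set" and m :: nat and Pstar :: "real^'n^'n"
    and L :: nat and \<beta> \<beta>h :: "nat \<Rightarrow> real^'n" and Phat :: "real^'n^'n"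
    and \<beta>bar :: "nat \<Rightarrow> real^'n" and \<mu> :: "nat \<Rightarrow> real" and \<epsilon> :: real
  assumes "subspace S" and "dim S = m"
    and "orth_projector Pstar S"
    and "L \<ge> 1"
    and "\<forall>l\<in>{1..L}. \<beta> l \<in> S"
    and "Phat \<in> Aset m"
    and "\<forall>P\<in>Aset m. obj \<beta>h L Phat \<le> obj \<beta>h L P"
    and "\<forall>k\<in>{1..m}. \<beta>bar k \<in> Bstar \<beta> L"
    and "\<forall>k\<in>{1..m}. 0 \<le> \<mu> k"
    and "loewner_le Pstar (\<Sum>k\<in>{1..m}. \<mu> k *\<^sub>R outer (\<beta>bar k) (\<beta>bar k))"
    and "\<forall>l\<in>{1..L}. norm (\<beta>h l - \<beta> l) \<le> \<epsilon>"
  shows "trace ((mat 1 - Phat) ** Pstar) \<le> 4 * \<epsilon>\<^sup>2 * (\<Sum>k\<in>{1..m}. \<mu> k)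
         \<and> trace ((Phat - Pstar) ** (Phat - Pstar)) \<le> 8 * \<epsilon>\<^sup>2 * (\<Sum>k\<in>{1..m}. \<mu> k)"
proof -
  note subS = assms(1) and dimS = assms(2) and projP = assms(3) and L1 = assms(4)
    and betaS = assms(5) and PhA = assms(6) and opt = assms(7) and barB = assms(8)
    and mu0 = assms(9) and loew = assms(10) and err = assms(11)
  define P where "P = Pstar"
  have symP: "transpose P = P" and idem: "P ** P = P" and rng: "range (\<lambda>x. P *v x) = S"
    using projP unfolding orth_projector_def P_def by blast+
  have trP: "trace P = real m" using proj_trace[OF subS projP] dimS P_def by simp
  have fixS: "P *v x = x" if "x \<in> S" for x
  proof -
    obtain y where "x = P *v y" using rng \<open>x \<in> S\<close> by auto
    thus ?thesis using idem by (simp add: matrix_vector_mul_assoc)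
  qed
  have qP: "x \<bullet> (P *v x) = (P *v x) \<bullet> (P *v x)" for x by (rule qf_proj[OF symP idem])
  have qP0: "0 \<le> x \<bullet> (P *v x)" for x using qP[of x] by simp
  have PA: "P \<in> Aset m"
  proof -
    have "loewner_le 0 P" unfolding loewner_le_def using qP0 by simp
    moreover have "loewner_le P (mat 1)" unfolding loewner_le_def
    proof
      fix x :: "real^'n"
      have "(x - P *v x) \<bullet> (x - P *v x) = x \<bullet> x - 2 * (x \<bullet> (P *v x)) + (P *v x) \<bullet> (P *v x)"
        by (simp add: inner_diff_left inner_diff_right inner_commute)
      hence "x \<bullet> x - x \<bullet> (P *v x) \<ge> 0" using qP[of x] by (smt (verit) inner_ge_zero)
      thus "0 \<le> x \<bullet> ((mat 1 - P) *v x)" by (simp add: matrix_vector_mult_diff_rdistrib inner_diff_right)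
    qed
    ultimately show ?thesis using symP trP by (simp add: Aset_def)
  qed
  have L0: "{1..L} \<noteq> {}" using L1 by simp
  have eps0: "\<epsilon> \<ge> 0" using err L1 by (meson atLeastAtMost_iff le_refl norm_ge_zero order_trans)
  have each: "\<beta>h l \<bullet> ((mat 1 - P) *v \<beta>h l) \<le> \<epsilon>^2" if l: "l \<in> {1..L}" for l
  proof -
    define w where "w = \<beta>h l - \<beta> l"
    have Pb: "P *v \<beta> l = \<beta> l" using fixS betaS l by auto
    have "\<beta>h l \<bullet> ((mat 1 - P) *v \<beta>h l) = (\<beta> l + w) \<bullet> ((\<beta> l + w) - P *v (\<beta> l + w))"
      by (simp add: w_def matrix_vector_mult_diff_rdistrib)
    also have "\<dots> = (\<beta> l + w) \<bullet> (w - P *v w)"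
      using Pb by (simp add: matrix_vector_right_distrib)
    also have "\<dots> = \<beta> l \<bullet> w - \<beta> l \<bullet> (P *v w) + (w \<bullet> w - w \<bullet> (P *v w))"
      by (simp add: inner_add_left inner_diff_right)
    also have "\<beta> l \<bullet> (P *v w) = w \<bullet> (P *v \<beta> l)" by (rule sym_inner[OF symP])
    also have "\<dots> = \<beta> l \<bullet> w" using Pb by (simp add: inner_commute)
    finally have "\<beta>h l \<bullet> ((mat 1 - P) *v \<beta>h l) = w \<bullet> w - w \<bullet> (P *v w)" by simp
    also have "\<dots> \<le> w \<bullet> w" using qP0[of w] by simp
    also have "\<dots> = (norm w)^2" by (simp add: power2_norm_eq_inner)
    also have "\<dots> \<le> \<epsilon>^2" using err l w_def by (intro power_mono) auto
    finally show ?thesis .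
  qed
  have objP: "obj \<beta>h L P \<le> \<epsilon>^2"
    unfolding obj_def using L0 each by (subst Max_le_iff) auto
  have objPh: "obj \<beta>h L Phat \<le> \<epsilon>^2" using opt PA objP P_def by fastforce
  define A where "A = mat 1 - Phat"
  have symPh: "transpose Phat = Phat" and psdPh: "\<And>x. 0 \<le> x \<bullet> (Phat *v x)"
    and psdA: "\<And>x. 0 \<le> x \<bullet> (A *v x)" and trPh: "trace Phat \<le> real m"
    using PhA by (auto simp: Aset_def loewner_le_def A_def)
  have symA: "transpose A = A" using symPh by (simp add: A_def transpose_diff')
  have qA_le: "x \<bullet> (A *v x) \<le> x \<bullet> x" for x
    using psdPh[of x] by (simp add: A_def matrix_vector_mult_diff_rdistrib inner_diff_right)
  have qAh: "\<beta>h l \<bullet> (A *v \<beta>h l) \<le> \<epsilon>^2" if "l \<in> {1..L}" for l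
  proof -
    have "\<beta>h l \<bullet> (A *v \<beta>h l) \<le> obj \<beta>h L Phat"
      unfolding obj_def A_def using that by (intro Max_ge) auto
    thus ?thesis using objPh by simp
  qed
  have qAb: "\<beta> l \<bullet> (A *v \<beta> l) \<le> (2*\<epsilon>)^2" if l: "l \<in> {1..L}" for l
  proof -
    have "sqrt (\<beta> l \<bullet> (A *v \<beta> l)) = sqrt ((\<beta>h l + (\<beta> l - \<beta>h l)) \<bullet> (A *v (\<beta>h l + (\<beta> l - \<beta>h l))))"
      by simp
    also have "\<dots> \<le> sqrt (\<beta>h l \<bullet> (A *v \<beta>h l)) + sqrt ((\<beta> l - \<beta>h l) \<bullet> (A *v (\<beta> l - \<beta>h l)))"
      by (rule sqrt_qf_triangle[OF symA psdA])
    also have "\<dots> \<le> \<epsilon> + \<epsilon>"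
    proof (rule add_mono)
      show "sqrt (\<beta>h l \<bullet> (A *v \<beta>h l)) \<le> \<epsilon>"
        using real_sqrt_le_mono[OF qAh[OF l]] eps0 by simp
      have "(\<beta> l - \<beta>h l) \<bullet> (A *v (\<beta> l - \<beta>h l)) \<le> (norm (\<beta> l - \<beta>h l))^2"
        using qA_le by (simp add: power2_norm_eq_inner)
      also have "\<dots> \<le> \<epsilon>^2" using err l by (intro power_mono) (auto simp: norm_minus_commute)
      finally show "sqrt ((\<beta> l - \<beta>h l) \<bullet> (A *v (\<beta> l - \<beta>h l))) \<le> \<epsilon>"
        using real_sqrt_le_mono eps0 by fastforce
    qed
    finally have "sqrt (\<beta> l \<bullet> (A *v \<beta> l)) \<le> 2*\<epsilon>" by simp
    hence "(sqrt (\<beta> l \<bullet> (A *v \<beta> l)))^2 \<le> (2*\<epsilon>)^2" using psdA[of "\<beta> l"] by (intro power_mono) auto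
    thus ?thesis using psdA[of "\<beta> l"] by simp
  qed
  have qAbar: "\<beta>bar k \<bullet> (A *v \<beta>bar k) \<le> 4*\<epsilon>^2" if k: "k \<in> {1..m}" for k
  proof -
    obtain c where bk: "\<beta>bar k = (\<Sum>l\<in>{1..L}. c l *\<^sub>R \<beta> l)" and cs: "(\<Sum>l\<in>{1..L}. \<bar>c l\<bar>) \<le> 1"
      using barB k unfolding Bstar_def by blast
    have "\<beta>bar k \<bullet> (A *v \<beta>bar k) \<le> (2*\<epsilon>)^2"
      unfolding bk by (rule qf_Bstar[OF symA psdA _ qAb cs]) (use eps0 in auto)
    thus ?thesis by (simp add: power2_eq_square)
  qed
  define C where "C = (\<Sum>k\<in>{1..m}. \<mu> k *\<^sub>R outer (\<beta>bar k) (\<beta>bar k))"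
  have trAC: "trace (A ** C) = (\<Sum>k\<in>{1..m}. \<mu> k * (\<beta>bar k \<bullet> (A *v \<beta>bar k)))"
    by (simp add: C_def mm_sum_right trace_sum mm_scaleR_right trace_scaleR trace_outer)
  also have "\<dots> \<le> (\<Sum>k\<in>{1..m}. \<mu> k * (4*\<epsilon>^2))"
    using mu0 qAbar by (intro sum_mono mult_left_mono) auto
  also have "\<dots> = 4 * \<epsilon>\<^sup>2 * (\<Sum>k\<in>{1..m}. \<mu> k)" by (simp only: sum_distrib_right[symmetric] mult.commute)
  finally have trAC_le: "trace (A ** C) \<le> 4 * \<epsilon>\<^sup>2 * (\<Sum>k\<in>{1..m}. \<mu> k)" .
  have "0 \<le> trace (A ** (C - P))"
  proof (rule trace_psd[OF psdA])
    show "transpose (C - P) = C - P" using symP by (simp add: transpose_diff' C_def transpose_sum_outer)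
    show "0 \<le> x \<bullet> ((C - P) *v x)" for x using loew by (simp add: loewner_le_def C_def P_def)
  qed
  hence t1: "trace (A ** P) \<le> 4 * \<epsilon>\<^sup>2 * (\<Sum>k\<in>{1..m}. \<mu> k)"
    using trAC_le by (simp add: mm_diff_left trace_sub)
  have "0 \<le> trace (Phat ** A)"
    by (rule trace_psd[OF psdPh symA psdA])
  hence PhPh: "trace (Phat ** Phat) \<le> trace Phat"
    by (simp add: A_def mm_diff_left trace_sub)
  have PhP: "trace (Phat ** P) = trace P - trace (A ** P)"
    by (simp add: A_def mm_diff_right trace_sub)
  have "trace ((Phat - P) ** (Phat - P)) = trace (Phat ** Phat) - trace (P ** Phat) - trace (Phat ** P) + trace (P ** P)"
    by (simp add: mm_diff_left mm_diff_right trace_sub)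
  also have "\<dots> = trace (Phat ** Phat) - 2 * trace (Phat ** P) + trace P"
    using idem trace_mul_sym[of P Phat] by simp
  also have "\<dots> \<le> 2 * trace (A ** P)" using PhPh PhP trPh trP by simp
  finally have t2: "trace ((Phat - P) ** (Phat - P)) \<le> 8 * \<epsilon>\<^sup>2 * (\<Sum>k\<in>{1..m}. \<mu> k)"
    using t1 by simp
  show ?thesis using t1 t2 by (simp add: A_def P_def)
qed


end
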